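(* Let $P\in\mathbb{R}^{n\times n}$ be symmetric with eigenvalues $\lambda_1\ge\dots\ge\lambda_n$ and orthonormal eigenvectors $u_1,\dots,u_n$ ($Pu_s=\lambda_su_s$). Let $H\in\mathbb{R}^{n\times n}$ be symmetric, $A=P+H$, with eigenvalues $\tilde\lambda_1\ge\dots\ge\tilde\lambda_n$ and orthonormal eigenvectors $\tilde u_1,\dots,\tilde u_n$ ($A\tilde u_s=\tilde\lambda_s\tilde u_s$). Fix $t\in[n]$ such that $\lambda_t$ has multiplicity one, let $\Delta_t=\min\{|\lambda_t-\lambda_s|: s\neq t\}$, and assume $\|H\|<|\lambda_t|/2$. For $u\in\mathbb{R}^n$ and $\lambda\neq0$ define the vector $\xi(u;H,\lambda)\in\mathbb{R}^n$ by $\xi_j(u;H,\lambda)=\sum_{p\ge1}(2/|\lambda|)^p|(H^pu)_j|$. Then for all $j\in[n]$, $$\min_{\zeta\in\{-1,+1\}}|(\tilde u_t-\zeta u_t)_j|\le\left(\frac{4\|H\|^2}{\Delta_t^2}+\frac{2\|H\|}{|\lambda_t|}\right)|u_{t,j}|+2\xi_j(u_t;H,\lambda_t)+\frac{4\sqrt2\|H\|}{\Delta_t}\sum_{s\ne t}\left|\frac{\lambda_s}{\lambda_t}\right|\big(|u_{s,j}|+\xi_j(u_s;H,\lambda_t)\big).$$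
   Context: $\|\cdot\|$ denotes the spectral norm of a matrix. The series defining $\xi_j$ may take the value $+\infty$, in which case the bound is trivial. *)

theory Defs
  imports "HOL-Analysis.Analysis"
begin

definition spec_norm :: "real^'n^'n \<Rightarrow> real" where
  "spec_norm H = onorm (\<lambda>x. H *v x)"

definition xi :: "real^'n^'n \<Rightarrow> real \<Rightarrow> real^'n \<Rightarrow> 'n \<Rightarrow> ennreal" where
  "xi H lam u j = (\<Sum>p. ennreal ((2 / \<bar>lam\<bar>) ^ Suc p * \<bar>(((\<lambda>x. H *v x) ^^ Suc p) u) $ j\<bar>))"

end

theory Submission
  imports Defs
begin


lemma onb_expand:
  fixes v :: "nat \<Rightarrow> real^'n" and x :: "real^'n"
  assumes orth: "\<And>s r. s < CARD('n) \<Longrightarrow> r < CARD('n) \<Longrightarrow> v s \<bullet> v r = (if s = r then 1 else 0)"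
  shows "x = (\<Sum>s<CARD('n). (x \<bullet> v s) *\<^sub>R v s)"
proof -
  let ?n = "CARD('n)"
  let ?B = "v ` {..<?n}"
  have inj: "inj_on v {..<?n}"
  proof (rule inj_onI)
    fix s r assume "s \<in> {..<?n}" "r \<in> {..<?n}" "v s = v r"
    then show "s = r" using orth[of s r] orth[of s s] by (auto split: if_splits)
  qed
  have cardB: "card ?B = ?n" using inj by (simp add: card_image)
  have indep: "independent ?B"
  proof (rule pairwise_orthogonal_independent)
    show "pairwise orthogonal ?B"
      unfolding pairwise_def orthogonal_def using orth by auto
    show "0 \<notin> ?B" using orth by fastforce
  qed
  have spanB: "UNIV \<subseteq> span ?B"
    by (rule card_ge_dim_independent) (use indep cardB in auto)
  define y where "y = x - (\<Sum>s<?n. (x \<bullet> v s) *\<^sub>R v s)"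
  have yv: "y \<bullet> v r = 0" if "r < ?n" for r
  proof -
    have "(\<Sum>s<?n. (x \<bullet> v s) *\<^sub>R v s) \<bullet> v r = (\<Sum>s<?n. (x \<bullet> v s) * (v s \<bullet> v r))"
      by (simp add: inner_sum_left)
    also have "\<dots> = (\<Sum>s<?n. if s = r then x \<bullet> v r else 0)"
      by (rule sum.cong) (use orth that in auto)
    also have "\<dots> = x \<bullet> v r" using that by simp
    finally show ?thesis unfolding y_def by (simp add: inner_diff_left)
  qed
  have "orthogonal y y"
    by (rule orthogonal_to_span[of y ?B]) (use spanB yv in \<open>auto simp: orthogonal_def\<close>)
  then have "y = 0" by (simp add: orthogonal_def)
  then show ?thesis unfolding y_def by simp
qed

lemma onb_inner:
  fixes v :: "nat \<Rightarrow> real^'n" and x y :: "real^'n"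
  assumes orth: "\<And>s r. s < CARD('n) \<Longrightarrow> r < CARD('n) \<Longrightarrow> v s \<bullet> v r = (if s = r then 1 else 0)"
  shows "x \<bullet> y = (\<Sum>s<CARD('n). (x \<bullet> v s) * (y \<bullet> v s))"
proof -
  have "x \<bullet> y = (\<Sum>s<CARD('n). (x \<bullet> v s) *\<^sub>R v s) \<bullet> y"
    using onb_expand[OF orth, of x] by simp
  also have "\<dots> = (\<Sum>s<CARD('n). (x \<bullet> v s) * (y \<bullet> v s))"
    unfolding inner_sum_left by (simp add: inner_commute)
  finally show ?thesis .
qed

lemma onb_rayleigh:
  fixes v :: "nat \<Rightarrow> real^'n" and x :: "real^'n" and M :: "real^'n^'n"
  assumes orth: "\<And>s r. s < CARD('n) \<Longrightarrow> r < CARD('n) \<Longrightarrow> v s \<bullet> v r = (if s = r then 1 else 0)"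
    and eig: "\<And>s. s < CARD('n) \<Longrightarrow> M *v v s = l s *\<^sub>R v s"
  shows "x \<bullet> (M *v x) = (\<Sum>s<CARD('n). l s * (x \<bullet> v s)^2)"
proof -
  have "M *v x = M *v (\<Sum>s<CARD('n). (x \<bullet> v s) *\<^sub>R v s)"
    using onb_expand[OF orth, of x] by simp
  also have "\<dots> = (\<Sum>s<CARD('n). (x \<bullet> v s) *\<^sub>R (M *v v s))"
    by (simp add: linear_sum[OF matrix_vector_mul_linear] linear_cmul[OF matrix_vector_mul_linear])
  also have "\<dots> = (\<Sum>s<CARD('n). (x \<bullet> v s) *\<^sub>R (l s *\<^sub>R v s))"
    by (rule sum.cong) (simp_all add: eig)
  finally have "x \<bullet> (M *v x) = x \<bullet> (\<Sum>s<CARD('n). (x \<bullet> v s) *\<^sub>R (l s *\<^sub>R v s))" by simp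
  also have "\<dots> = (\<Sum>s<CARD('n). l s * (x \<bullet> v s)^2)"
    by (simp add: inner_sum_right power2_eq_square mult_ac)
  finally show ?thesis .
qed

lemma Hbound:
  fixes H :: "real^'n^'n"
  shows "norm (H *v x) \<le> spec_norm H * norm x"
  unfolding spec_norm_def by (rule onorm) simp

lemma Hquad:
  fixes H :: "real^'n^'n"
  shows "\<bar>x \<bullet> (H *v x)\<bar> \<le> spec_norm H * (x \<bullet> x)"
proof -
  have "\<bar>x \<bullet> (H *v x)\<bar> \<le> norm x * norm (H *v x)" by (rule Cauchy_Schwarz_ineq2)
  also have "\<dots> \<le> norm x * (spec_norm H * norm x)" by (rule mult_left_mono[OF Hbound]) simp
  also have "\<dots> = spec_norm H * (x \<bullet> x)" by (simp add: dot_square_norm power2_eq_square)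
  finally show ?thesis .
qed



lemma exists_orth:
  fixes S :: "(real^'n) set"
  assumes "finite S" "card S < CARD('n)"
  obtains x where "x \<noteq> 0" "\<And>y. y \<in> S \<Longrightarrow> x \<bullet> y = 0"
proof -
  have "dim S \<le> card S" by (rule dim_le_card) (use assms in \<open>auto intro: span_base\<close>)
  then have d: "dim S < DIM(real^'n)" using assms by simp
  obtain x where "x \<noteq> 0" "\<And>y. y \<in> span S \<Longrightarrow> orthogonal x y"
    using orthogonal_to_subspace_exists[OF d] by blast
  then show ?thesis using that by (auto simp: orthogonal_def intro: span_base)
qed

lemma weyl:
  fixes P H :: "real^'n^'n"
    and lam lamt :: "nat \<Rightarrow> real"
    and u ut :: "nat \<Rightarrow> real^'n"
    and t :: nat
  assumes lam_sorted: "\<And>s r. s \<le> r \<Longrightarrow> r < CARD('n) \<Longrightarrow> lam r \<le> lam s"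
    and u_orth: "\<And>s r. s < CARD('n) \<Longrightarrow> r < CARD('n) \<Longrightarrow> u s \<bullet> u r = (if s = r then 1 else 0)"
    and u_eig: "\<And>s. s < CARD('n) \<Longrightarrow> P *v u s = lam s *\<^sub>R u s"
    and lamt_sorted: "\<And>s r. s \<le> r \<Longrightarrow> r < CARD('n) \<Longrightarrow> lamt r \<le> lamt s"
    and ut_orth: "\<And>s r. s < CARD('n) \<Longrightarrow> r < CARD('n) \<Longrightarrow> ut s \<bullet> ut r = (if s = r then 1 else 0)"
    and ut_eig: "\<And>s. s < CARD('n) \<Longrightarrow> (P + H) *v ut s = lamt s *\<^sub>R ut s"
    and t_range: "t < CARD('n)"
  shows "\<bar>lamt t - lam t\<bar> \<le> spec_norm H"
proof -
  let ?n = "CARD('n)"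
  let ?h = "spec_norm H"
  have split: "x \<bullet> ((P + H) *v x) = x \<bullet> (P *v x) + x \<bullet> (H *v x)" for x
    by (simp add: matrix_vector_mult_add_rdistrib inner_add_right)
  have nrm: "x \<bullet> x = (\<Sum>s<?n. (x \<bullet> u s)^2)" "x \<bullet> x = (\<Sum>s<?n. (x \<bullet> ut s)^2)" for x
    using onb_inner[OF u_orth, of x x] onb_inner[OF ut_orth, of x x] by (simp_all add: power2_eq_square)
  have low: "lamt t \<ge> lam t - ?h"
  proof -
    let ?S = "u ` {t<..<?n} \<union> ut ` {..<t}"
    have "card ?S \<le> card (u ` {t<..<?n}) + card (ut ` {..<t})" by (rule card_Un_le)
    also have "\<dots> \<le> card {t<..<?n} + card {..<t}" by (intro add_mono card_image_le) auto
    also have "\<dots> < ?n" using t_range by simp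
    finally obtain x where x0: "x \<noteq> 0" and xo: "\<And>y. y \<in> ?S \<Longrightarrow> x \<bullet> y = 0"
      by (rule exists_orth[rotated]) auto
    have "lam t * (x \<bullet> x) = (\<Sum>s<?n. lam t * (x \<bullet> u s)^2)" by (simp add: nrm(1)[of x] sum_distrib_left)
    also have "\<dots> \<le> (\<Sum>s<?n. lam s * (x \<bullet> u s)^2)"
    proof (rule sum_mono)
      fix s assume s: "s \<in> {..<?n}"
      show "lam t * (x \<bullet> u s)^2 \<le> lam s * (x \<bullet> u s)^2"
      proof (cases "s \<le> t")
        case True then show ?thesis using lam_sorted[of s t] t_range by (intro mult_right_mono) auto
      next
        case False then show ?thesis using xo[of "u s"] s by auto
      qed
    qed
    also have "\<dots> = x \<bullet> (P *v x)" by (rule onb_rayleigh[OF u_orth u_eig, symmetric])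
    finally have 1: "lam t * (x \<bullet> x) \<le> x \<bullet> (P *v x)" .
    have "x \<bullet> ((P + H) *v x) = (\<Sum>s<?n. lamt s * (x \<bullet> ut s)^2)" by (rule onb_rayleigh[OF ut_orth ut_eig])
    also have "\<dots> \<le> (\<Sum>s<?n. lamt t * (x \<bullet> ut s)^2)"
    proof (rule sum_mono)
      fix s assume s: "s \<in> {..<?n}"
      show "lamt s * (x \<bullet> ut s)^2 \<le> lamt t * (x \<bullet> ut s)^2"
      proof (cases "t \<le> s")
        case True then show ?thesis using lamt_sorted[of t s] s by (intro mult_right_mono) auto
      next
        case False then show ?thesis using xo[of "ut s"] s by auto
      qed
    qed
    also have "\<dots> = lamt t * (x \<bullet> x)" by (simp add: nrm(2)[of x] sum_distrib_left)
    finally have 2: "x \<bullet> ((P + H) *v x) \<le> lamt t * (x \<bullet> x)" .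
    have 3: "x \<bullet> (H *v x) \<ge> - ?h * (x \<bullet> x)" using Hquad[of x H] by linarith
    have "(lam t - ?h) * (x \<bullet> x) \<le> lamt t * (x \<bullet> x)"
      using 1 2 3 split[of x] by (simp add: algebra_simps)
    moreover have "x \<bullet> x > 0" using x0 by simp
    ultimately show ?thesis by simp
  qed
  have up: "lamt t \<le> lam t + ?h"
  proof -
    let ?S = "u ` {..<t} \<union> ut ` {t<..<?n}"
    have "card ?S \<le> card (u ` {..<t}) + card (ut ` {t<..<?n})" by (rule card_Un_le)
    also have "\<dots> \<le> card {..<t} + card {t<..<?n}" by (intro add_mono card_image_le) auto
    also have "\<dots> < ?n" using t_range by simp
    finally obtain x where x0: "x \<noteq> 0" and xo: "\<And>y. y \<in> ?S \<Longrightarrow> x \<bullet> y = 0"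
      by (rule exists_orth[rotated]) auto
    have "x \<bullet> (P *v x) = (\<Sum>s<?n. lam s * (x \<bullet> u s)^2)" by (rule onb_rayleigh[OF u_orth u_eig])
    also have "\<dots> \<le> (\<Sum>s<?n. lam t * (x \<bullet> u s)^2)"
    proof (rule sum_mono)
      fix s assume s: "s \<in> {..<?n}"
      show "lam s * (x \<bullet> u s)^2 \<le> lam t * (x \<bullet> u s)^2"
      proof (cases "t \<le> s")
        case True then show ?thesis using lam_sorted[of t s] s by (intro mult_right_mono) auto
      next
        case False then show ?thesis using xo[of "u s"] s by auto
      qed
    qed
    also have "\<dots> = lam t * (x \<bullet> x)" by (simp add: nrm(1)[of x] sum_distrib_left)
    finally have 1: "x \<bullet> (P *v x) \<le> lam t * (x \<bullet> x)" .
    have "lamt t * (x \<bullet> x) = (\<Sum>s<?n. lamt t * (x \<bullet> ut s)^2)" by (simp add: nrm(2)[of x] sum_distrib_left)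
    also have "\<dots> \<le> (\<Sum>s<?n. lamt s * (x \<bullet> ut s)^2)"
    proof (rule sum_mono)
      fix s assume s: "s \<in> {..<?n}"
      show "lamt t * (x \<bullet> ut s)^2 \<le> lamt s * (x \<bullet> ut s)^2"
      proof (cases "s \<le> t")
        case True then show ?thesis using lamt_sorted[of s t] t_range by (intro mult_right_mono) auto
      next
        case False then show ?thesis using xo[of "ut s"] s by auto
      qed
    qed
    also have "\<dots> = x \<bullet> ((P + H) *v x)" by (rule onb_rayleigh[OF ut_orth ut_eig, symmetric])
    finally have 2: "lamt t * (x \<bullet> x) \<le> x \<bullet> ((P + H) *v x)" .
    have 3: "x \<bullet> (H *v x) \<le> ?h * (x \<bullet> x)" using Hquad[of x H] by linarith
    have "lamt t * (x \<bullet> x) \<le> (lam t + ?h) * (x \<bullet> x)"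
      using 1 2 3 split[of x] by (simp add: algebra_simps)
    moreover have "x \<bullet> x > 0" using x0 by simp
    ultimately show ?thesis by simp
  qed
  show ?thesis using low up by linarith
qed



lemma G_lin: "linear (((\<lambda>x. (H::real^'n^'n) *v x)) ^^ k)"
proof (induction k)
  case 0 then show ?case by (simp add: linear_id[unfolded id_def])
next
  case (Suc k)
  have "linear ((\<lambda>x. H *v x) \<circ> ((\<lambda>x. H *v x) ^^ k))"
    by (rule linear_compose[OF Suc]) simp
  then show ?case by (simp only: funpow.simps(2))
qed

lemma spec_norm_nonneg: "0 \<le> spec_norm (H::real^'n^'n)"
  unfolding spec_norm_def by (rule onorm_pos_le) simp

lemma G_norm: "norm ((((\<lambda>x. (H::real^'n^'n) *v x)) ^^ k) x) \<le> spec_norm H ^ k * norm x"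
proof (induction k)
  case 0 then show ?case by simp
next
  case (Suc k)
  have "norm (((\<lambda>x. H *v x) ^^ Suc k) x) = norm (H *v (((\<lambda>x. H *v x) ^^ k) x))" by simp
  also have "\<dots> \<le> spec_norm H * norm (((\<lambda>x. H *v x) ^^ k) x)" by (rule Hbound)
  also have "\<dots> \<le> spec_norm H * (spec_norm H ^ k * norm x)"
    by (rule mult_left_mono[OF Suc spec_norm_nonneg])
  finally show ?case by (simp add: mult_ac)
qed

lemma neumann:
  fixes H :: "real^'n^'n" and w y :: "real^'n"
  assumes mu: "mu \<noteq> 0" and eq: "w = y + (1/mu) *\<^sub>R (H *v w)"
  shows "w = (\<Sum>p\<le>N. (1/mu)^p *\<^sub>R (((\<lambda>x. H *v x) ^^ p) y))
             + (1/mu)^(Suc N) *\<^sub>R (((\<lambda>x. H *v x) ^^ Suc N) w)"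
proof (induction N)
  case 0 then show ?case using eq by simp
next
  case (Suc N)
  let ?G = "\<lambda>k. ((\<lambda>x. H *v x) ^^ k)"
  have "?G (Suc N) w = ?G (Suc N) y + (1/mu) *\<^sub>R ?G (Suc N) (H *v w)"
    using linear_add[OF G_lin[where H=H and k="Suc N"]] linear_cmul[OF G_lin[where H=H and k="Suc N"]] eq
    by metis
  also have "?G (Suc N) (H *v w) = ?G (Suc (Suc N)) w"
    by (simp only: funpow_Suc_right o_def)
  finally have E: "?G (Suc N) w = ?G (Suc N) y + (1/mu) *\<^sub>R ?G (Suc (Suc N)) w" .
  have "(1/mu)^(Suc N) *\<^sub>R ?G (Suc N) w
     = (1/mu)^(Suc N) *\<^sub>R ?G (Suc N) y + ((1/mu)^(Suc N) * (1/mu)) *\<^sub>R ?G (Suc (Suc N)) w"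
    by (subst E) (simp only: scaleR_add_right scaleR_scaleR)
  also have "(1/mu)^(Suc N) * (1/mu) = (1/mu)^(Suc (Suc N))" by (rule power_Suc2[symmetric])
  finally have "(1/mu)^(Suc N) *\<^sub>R ?G (Suc N) w
     = (1/mu)^(Suc N) *\<^sub>R ?G (Suc N) y + (1/mu)^(Suc (Suc N)) *\<^sub>R ?G (Suc (Suc N)) w" .
  with Suc show ?case by (simp only: sum.atMost_Suc add.assoc)
qed

lemma Phi_lin:
  fixes H :: "real^'n^'n"
  shows "linear (\<lambda>v. (\<Sum>p\<in>F. c p *\<^sub>R (((\<lambda>x. H *v x) ^^ p) v)))"
  by (rule linear_compose_sum) (auto intro!: linearI simp: linear_add[OF G_lin] linear_cmul[OF G_lin] scaleR_add_right)

lemma xi_partial: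
  fixes H :: "real^'n^'n"
  shows "ennreal (\<Sum>p<N. (2 / \<bar>lam\<bar>) ^ Suc p * \<bar>(((\<lambda>x. H *v x) ^^ Suc p) u) $ j\<bar>) \<le> xi H lam u j"
proof -
  have "ennreal (\<Sum>p<N. (2 / \<bar>lam\<bar>) ^ Suc p * \<bar>(((\<lambda>x. H *v x) ^^ Suc p) u) $ j\<bar>)
      = (\<Sum>p<N. ennreal ((2 / \<bar>lam\<bar>) ^ Suc p * \<bar>(((\<lambda>x. H *v x) ^^ Suc p) u) $ j\<bar>))"
    by (rule sum_ennreal[symmetric]) simp
  also have "\<dots> \<le> xi H lam u j" unfolding xi_def
    by (rule sum_le_suminf) auto
  finally show ?thesis .
qed



theorem lemmaB2:
  fixes P H :: "real^'n^'n"
    and lam lamt :: "nat \<Rightarrow> real"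
    and u ut :: "nat \<Rightarrow> real^'n"
    and t :: nat
  defines "n \<equiv> CARD('n)"
  defines "A \<equiv> P + H"
  defines "Delta \<equiv> Min {\<bar>lam t - lam s\<bar> | s. s < n \<and> s \<noteq> t}"
  assumes P_sym: "transpose P = P"
    and H_sym: "transpose H = H"
    and lam_sorted: "\<And>s r. s \<le> r \<Longrightarrow> r < n \<Longrightarrow> lam r \<le> lam s"
    and u_orth: "\<And>s r. s < n \<Longrightarrow> r < n \<Longrightarrow> u s \<bullet> u r = (if s = r then 1 else 0)"
    and u_eig: "\<And>s. s < n \<Longrightarrow> P *v u s = lam s *\<^sub>R u s"
    and lamt_sorted: "\<And>s r. s \<le> r \<Longrightarrow> r < n \<Longrightarrow> lamt r \<le> lamt s"
    and ut_orth: "\<And>s r. s < n \<Longrightarrow> r < n \<Longrightarrow> ut s \<bullet> ut r = (if s = r then 1 else 0)"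
    and ut_eig: "\<And>s. s < n \<Longrightarrow> A *v ut s = lamt s *\<^sub>R ut s"
    and t_range: "t < n"
    and simple: "\<And>s. s < n \<Longrightarrow> s \<noteq> t \<Longrightarrow> lam s \<noteq> lam t"
    and H_small: "spec_norm H < \<bar>lam t\<bar> / 2"
  shows "\<forall>j. ennreal (min \<bar>(ut t - u t) $ j\<bar> \<bar>(ut t + u t) $ j\<bar>)
     \<le> ennreal ((4 * (spec_norm H)\<^sup>2 / Delta\<^sup>2 + 2 * spec_norm H / \<bar>lam t\<bar>) * \<bar>u t $ j\<bar>)
        + 2 * xi H (lam t) (u t) j
        + ennreal (4 * sqrt 2 * spec_norm H / Delta)
          * (\<Sum>s\<in>{..<n} - {t}. ennreal \<bar>lam s / lam t\<bar> * (ennreal \<bar>u s $ j\<bar> + xi H (lam t) (u s) j))"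
proof -
  let ?h = "spec_norm H"
  let ?G = "\<lambda>k. ((\<lambda>x. H *v x) ^^ k)"
  define mu where "mu = lamt t"
  define w where "w = ut t"
  define c where "c s = w \<bullet> u s" for s
  define T where "T = {..<n} - {t}"
  define alpha where "alpha = 4 * ?h\<^sup>2 / Delta\<^sup>2 + 2 * ?h / \<bar>lam t\<bar>"
  define beta where "beta = 4 * sqrt 2 * ?h / Delta"
  note uo = u_orth[unfolded n_def] and ue = u_eig[unfolded n_def]
  note uto = ut_orth[unfolded n_def] and ute = ut_eig[unfolded n_def A_def]
  have tr: "t < CARD('n)" using t_range n_def by simp
  have h0: "0 \<le> ?h" by (rule spec_norm_nonneg)
  have lt: "2 * ?h < \<bar>lam t\<bar>" using H_small by simp
  have weyl: "\<bar>mu - lam t\<bar> \<le> ?h" unfolding mu_def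
    by (rule weyl[OF lam_sorted[unfolded n_def] uo ue lamt_sorted[unfolded n_def] uto ute tr])
  have mubig: "\<bar>mu\<bar> > \<bar>lam t\<bar> / 2" using weyl lt by linarith
  have mu0: "mu \<noteq> 0" using mubig lt h0 by auto
  have ww: "w \<bullet> w = 1" unfolding w_def using uto[OF tr tr] by simp
  have nw: "norm w = 1" using ww by (simp add: norm_eq_1)
  have nu: "norm (u s) = 1" if "s < n" for s using uo[of s s] that n_def by (simp add: norm_eq_1)
  have Aw: "(P + H) *v w = mu *\<^sub>R w" unfolding w_def mu_def using ute[OF tr] .
  have expand: "w = (\<Sum>s<n. c s *\<^sub>R u s)"
    unfolding c_def n_def by (rule onb_expand[OF uo])
  have Pw: "P *v w = (\<Sum>s<n. (c s * lam s) *\<^sub>R u s)"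
  proof -
    have "P *v w = (\<Sum>s<n. c s *\<^sub>R (P *v u s))"
      by (subst expand) (simp add: linear_sum[OF matrix_vector_mul_linear] linear_cmul[OF matrix_vector_mul_linear])
    also have "\<dots> = (\<Sum>s<n. (c s * lam s) *\<^sub>R u s)"
      by (rule sum.cong) (simp_all add: u_eig)
    finally show ?thesis .
  qed
  define y where "y = (1/mu) *\<^sub>R (P *v w)"
  have eqN: "w = y + (1/mu) *\<^sub>R (H *v w)"
  proof -
    have "mu *\<^sub>R w = P *v w + H *v w" using Aw by (simp add: matrix_vector_mult_add_rdistrib)
    then have "(1/mu) *\<^sub>R (mu *\<^sub>R w) = (1/mu) *\<^sub>R (P *v w + H *v w)" by simp
    then show ?thesis using mu0 unfolding y_def by (simp add: scaleR_add_right)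
  qed
  have cle1: "\<bar>c s\<bar> \<le> 1" if "s < n" for s
    using Cauchy_Schwarz_ineq2[of w "u s"] nw nu[OF that] unfolding c_def by simp
  have key: "(mu - lam s) * c s = u s \<bullet> (H *v w)" if "s < n" for s
  proof -
    have 1: "u s \<bullet> ((P + H) *v w) = mu * c s" using Aw unfolding c_def by (simp add: inner_commute)
    have "u s \<bullet> (P *v w) = (u s v* P) \<bullet> w" by (simp add: dot_lmul_matrix)
    also have "u s v* P = P *v u s" using vector_transpose_matrix[of "u s" P] P_sym by simp
    finally have 2: "u s \<bullet> (P *v w) = lam s * c s" using u_eig[OF that] unfolding c_def
      by (simp add: inner_commute)
    show ?thesis using 1 2 by (simp add: matrix_vector_mult_add_rdistrib inner_add_right algebra_simps)
  qed
  have nHw: "norm (H *v w) \<le> ?h" using Hbound[of H w] nw by simp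
  have uHw: "\<bar>u s \<bullet> (H *v w)\<bar> \<le> ?h" if "s < n" for s
    using Cauchy_Schwarz_ineq2[of "u s" "H *v w"] nu[OF that] nHw by simp
  have pars1: "(\<Sum>s<n. (c s)^2) = 1"
    using onb_inner[OF uo, of w w] ww unfolding c_def n_def by (simp add: power2_eq_square)
  have parsH: "(\<Sum>s<n. (u s \<bullet> (H *v w))^2) \<le> ?h^2"
  proof -
    have "(\<Sum>s<n. (u s \<bullet> (H *v w))^2) = (H *v w) \<bullet> (H *v w)"
      using onb_inner[OF uo, of "H *v w" "H *v w"] unfolding n_def by (simp add: power2_eq_square inner_commute)
    also have "\<dots> = (norm (H *v w))^2" by (simp add: dot_square_norm)
    also have "\<dots> \<le> ?h^2" using nHw by (intro power_mono) auto
    finally show ?thesis .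
  qed
  have tn: "t < n" by (rule t_range)
  have Tsub: "T \<subseteq> {..<n}" unfolding T_def by auto
  have Dpos: "Delta > 0" and Dle: "\<And>s. s \<in> T \<Longrightarrow> Delta \<le> \<bar>lam t - lam s\<bar>" if "T \<noteq> {}"
  proof -
    let ?D = "{\<bar>lam t - lam s\<bar> | s. s < n \<and> s \<noteq> t}"
    have fin: "finite ?D" by simp
    have ne: "?D \<noteq> {}" using that unfolding T_def by auto
    have "Delta \<in> ?D" unfolding Delta_def using Min_in[OF fin ne] .
    then show "Delta > 0" using simple by force
    show "Delta \<le> \<bar>lam t - lam s\<bar>" if "s \<in> T" for s
      unfolding Delta_def by (rule Min_le[OF fin]) (use that T_def in auto)
  qed
  have cs: "\<bar>c s\<bar> \<le> 2 * ?h / Delta" if s: "s \<in> T" for s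
  proof -
    have Tn: "T \<noteq> {}" using s by auto
    note D = Dpos[OF Tn] Dle[OF Tn s]
    have sn: "s < n" using s Tsub by auto
    show ?thesis
    proof (cases "?h \<le> Delta / 2")
      case True
      have g: "\<bar>mu - lam s\<bar> \<ge> Delta / 2" using D weyl True by linarith
      have "\<bar>mu - lam s\<bar> * \<bar>c s\<bar> \<le> ?h" using key[OF sn] uHw[OF sn] by (simp add: abs_mult)
      then have "Delta / 2 * \<bar>c s\<bar> \<le> ?h" using g by (meson abs_ge_zero mult_right_mono order_trans)
      then show ?thesis using D by (simp add: field_simps)
    next
      case False
      then have "1 \<le> 2 * ?h / Delta" using D by (simp add: field_simps)
      then show ?thesis using cle1[OF sn] by linarith
    qed
  qed
  have sumT: "(\<Sum>s\<in>T. (c s)^2) \<le> 4 * ?h\<^sup>2 / Delta\<^sup>2"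
  proof (cases "T = {}")
    case True then show ?thesis by simp
  next
    case Tn: False
    note D = Dpos[OF Tn]
    show ?thesis
    proof (cases "?h \<le> Delta / 2")
      case True
      have "(\<Sum>s\<in>T. (c s)^2) \<le> (\<Sum>s\<in>T. (4 / Delta\<^sup>2) * (u s \<bullet> (H *v w))^2)"
      proof (rule sum_mono)
        fix s assume s: "s \<in> T"
        have sn: "s < n" using s Tsub by auto
        have g: "\<bar>mu - lam s\<bar> \<ge> Delta / 2" using Dle[OF Tn s] weyl True by linarith
        have "(Delta/2)^2 * (c s)^2 \<le> (mu - lam s)^2 * (c s)^2"
        proof (rule mult_right_mono)
          show "(Delta/2)^2 \<le> (mu - lam s)^2" using power_mono[OF g, of 2] D by simp
        qed simp
        also have "\<dots> = (u s \<bullet> (H *v w))^2" using key[OF sn] by (simp add: power_mult_distrib[symmetric])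
        finally show "(c s)^2 \<le> (4 / Delta\<^sup>2) * (u s \<bullet> (H *v w))^2" using D
          by (simp add: field_simps power2_eq_square)
      qed
      also have "\<dots> = (4 / Delta\<^sup>2) * (\<Sum>s\<in>T. (u s \<bullet> (H *v w))^2)" by (simp add: sum_distrib_left)
      also have "\<dots> \<le> (4 / Delta\<^sup>2) * (\<Sum>s<n. (u s \<bullet> (H *v w))^2)"
        by (intro mult_left_mono sum_mono2) (use Tsub in auto)
      also have "\<dots> \<le> (4 / Delta\<^sup>2) * ?h^2" by (intro mult_left_mono parsH) auto
      finally show ?thesis by simp
    next
      case False
      have "(\<Sum>s\<in>T. (c s)^2) \<le> (\<Sum>s<n. (c s)^2)" by (intro sum_mono2) (use Tsub in auto)
      also have "\<dots> = 1" by (rule pars1)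
      also have "1 \<le> 4 * ?h\<^sup>2 / Delta\<^sup>2"
      proof -
        have "Delta < 2 * ?h" using False by simp
        then have "Delta^2 \<le> (2 * ?h)^2" using D by (intro power_mono) auto
        then show ?thesis using D by (simp add: field_simps power2_eq_square)
      qed
      finally show ?thesis .
    qed
  qed
  have ct: "1 - \<bar>c t\<bar> \<le> 4 * ?h\<^sup>2 / Delta\<^sup>2"
  proof -
    have "1 = (c t)^2 + (\<Sum>s\<in>T. (c s)^2)"
      using pars1 sum.remove[of "{..<n}" t "\<lambda>s. (c s)^2"] tn unfolding T_def by simp
    moreover have "\<bar>c t\<bar> \<ge> (c t)^2" using cle1[OF tn]
      by (metis abs_ge_zero abs_mult_self_eq mult_right_le_one_le power2_eq_square)
    ultimately show ?thesis using sumT by linarith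
  qed

  define r where "r = lam t / mu"
  have lpos: "0 < \<bar>lam t\<bar>" using lt h0 by linarith
  have inv: "\<bar>1/mu\<bar> \<le> 2 / \<bar>lam t\<bar>" using mubig lpos mu0
    by (simp add: field_simps abs_divide)
  have r2: "\<bar>r\<bar> \<le> 2" using mubig mu0 unfolding r_def by (simp add: abs_divide field_simps)
  have r1: "\<bar>r - 1\<bar> \<le> 2 * ?h / \<bar>lam t\<bar>"
  proof -
    have "r - 1 = (lam t - mu) / mu" unfolding r_def using mu0 by (simp add: field_simps)
    then have "\<bar>r - 1\<bar> = \<bar>lam t - mu\<bar> * \<bar>1/mu\<bar>" by (simp add: abs_divide)
    also have "\<dots> \<le> ?h * (2 / \<bar>lam t\<bar>)" using weyl inv
      by (intro mult_mono) (auto simp: abs_minus_commute)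
    finally show ?thesis by (simp add: mult.commute)
  qed
  define zeta where "zeta = (if c t \<ge> 0 then 1 else -1::real)"
  have kt: "\<bar>c t * r - zeta\<bar> \<le> alpha"
  proof -
    have e1: "\<bar>c t * r - zeta\<bar> = \<bar>\<bar>c t\<bar> * r - 1\<bar>"
      unfolding zeta_def by (cases "c t \<ge> 0") (auto simp: abs_if algebra_simps)
    have "\<bar>c t\<bar> * r - 1 = \<bar>c t\<bar> * (r - 1) - (1 - \<bar>c t\<bar>)" by (simp add: algebra_simps)
    moreover have "\<bar>\<bar>c t\<bar> * (r - 1)\<bar> = \<bar>c t\<bar> * \<bar>r - 1\<bar>" by (simp add: abs_mult)
    ultimately have "\<bar>\<bar>c t\<bar> * r - 1\<bar> \<le> \<bar>c t\<bar> * \<bar>r - 1\<bar> + (1 - \<bar>c t\<bar>)"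
      using cle1[OF tn] by (smt (verit))
    also have "\<dots> \<le> 1 * \<bar>r - 1\<bar> + (1 - \<bar>c t\<bar>)"
      using cle1[OF tn] by (intro add_mono mult_right_mono) auto
    also have "\<dots> \<le> alpha" unfolding alpha_def using r1 ct by simp
    finally show ?thesis using e1 by simp
  qed
  have ks: "\<bar>c s * lam s / mu\<bar> \<le> beta * \<bar>lam s / lam t\<bar>" if s: "s \<in> T" for s
  proof -
    have D: "Delta > 0" using Dpos s by blast
    have "\<bar>c s * lam s / mu\<bar> = \<bar>c s\<bar> * \<bar>lam s\<bar> * \<bar>1/mu\<bar>" by (simp add: abs_mult abs_divide)
    also have "\<dots> \<le> (2 * ?h / Delta) * \<bar>lam s\<bar> * (2 / \<bar>lam t\<bar>)"
      using cs[OF s] inv D h0 by (intro mult_mono) auto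
    also have "\<dots> = (4 * ?h / Delta) * \<bar>lam s / lam t\<bar>" by (simp add: abs_divide)
    also have "\<dots> \<le> beta * \<bar>lam s / lam t\<bar>" unfolding beta_def
    proof (intro mult_right_mono)
      have "4 * ?h / Delta = 4 * 1 * ?h / Delta" by simp
      also have "\<dots> \<le> 4 * sqrt 2 * ?h / Delta" using D h0
        by (intro divide_right_mono mult_right_mono mult_left_mono) auto
      finally show "4 * ?h / Delta \<le> 4 * sqrt 2 * ?h / Delta" .
    qed simp
    finally show ?thesis .
  qed
  have alpha0: "0 \<le> alpha" unfolding alpha_def using h0 by simp
  show ?thesis
  proof (rule allI, rule ennreal_le_epsilon)
    fix j and e :: real assume e: "0 < e"
    define q where "q = ?h / \<bar>mu\<bar>"
    have q0: "0 \<le> q" unfolding q_def using h0 by simp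
    have q1: "q < 1" unfolding q_def using mubig lt mu0 by (simp add: field_simps)
    obtain N0 where "q ^ N0 < e" using real_arch_pow_inv[OF e q1] by blast
    moreover have "q ^ Suc N0 \<le> q ^ N0" using q0 q1 by (simp add: mult_left_le_one_le)
    ultimately have qN: "q ^ Suc N0 < e" by linarith
    define N where "N = N0"
    define Psi where "Psi v = (\<Sum>p<N. (1/mu)^Suc p *\<^sub>R ?G (Suc p) v)" for v
    define S where "S v = (\<Sum>p<N. (2/\<bar>lam t\<bar>)^Suc p * \<bar>(?G (Suc p) v) $ j\<bar>)" for v
    define R where "R = (1/mu)^Suc N *\<^sub>R ?G (Suc N) w"
    have neu: "w = (\<Sum>p\<le>N. (1/mu)^p *\<^sub>R ?G p y) + R" unfolding R_def by (rule neumann[OF mu0 eqN])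
    have Phi: "(\<Sum>p\<le>N. (1/mu)^p *\<^sub>R ?G p v) = v + Psi v" for v
      unfolding Psi_def by (simp add: sum.atMost_shift)
    define k where "k s = c s * lam s / mu" for s
    have ydec: "y = (\<Sum>s<n. k s *\<^sub>R u s)" unfolding y_def Pw k_def by (simp add: scaleR_sum_right)
    have L: "linear (\<lambda>v. (\<Sum>p\<le>N. (1/mu)^p *\<^sub>R ?G p v))" by (rule Phi_lin)
    have "(\<Sum>p\<le>N. (1/mu)^p *\<^sub>R ?G p y) = (\<Sum>s<n. k s *\<^sub>R (\<Sum>p\<le>N. (1/mu)^p *\<^sub>R ?G p (u s)))"
      unfolding ydec by (simp only: linear_sum[OF L] linear_cmul[OF L] o_def)
    then have wdec: "w = (\<Sum>s<n. k s *\<^sub>R (u s + Psi (u s))) + R" using neu by (simp add: Phi)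
    have wj: "w $ j = k t * (u t $ j + Psi (u t) $ j) + (\<Sum>s\<in>T. k s * (u s $ j + Psi (u s) $ j)) + R $ j"
    proof -
      have "w $ j = (\<Sum>s<n. k s * (u s $ j + Psi (u s) $ j)) + R $ j"
        by (subst wdec) simp
      also have "(\<Sum>s<n. k s * (u s $ j + Psi (u s) $ j)) = k t * (u t $ j + Psi (u t) $ j) + (\<Sum>s\<in>T. k s * (u s $ j + Psi (u s) $ j))"
        unfolding T_def using sum.remove[of "{..<n}" t] tn by simp
      finally show ?thesis .
    qed
    have S0: "0 \<le> S v" for v unfolding S_def by (intro sum_nonneg) simp
    have PsiS: "\<bar>Psi v $ j\<bar> \<le> S v" for v
    proof -
      have "\<bar>Psi v $ j\<bar> = \<bar>\<Sum>p<N. (1/mu)^Suc p * (?G (Suc p) v) $ j\<bar>" unfolding Psi_def by simp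
      also have "\<dots> \<le> (\<Sum>p<N. \<bar>(1/mu)^Suc p * (?G (Suc p) v) $ j\<bar>)" by (rule sum_abs)
      also have "\<dots> \<le> S v" unfolding S_def
      proof (rule sum_mono)
        fix p
        have "\<bar>(1/mu)^Suc p\<bar> \<le> (2/\<bar>lam t\<bar>)^Suc p"
          unfolding power_abs by (rule power_mono[OF inv]) simp
        then show "\<bar>(1/mu)^Suc p * (?G (Suc p) v) $ j\<bar> \<le> (2/\<bar>lam t\<bar>)^Suc p * \<bar>(?G (Suc p) v) $ j\<bar>"
          unfolding abs_mult by (intro mult_right_mono) auto
      qed
      finally show ?thesis .
    qed
    have Rj: "\<bar>R $ j\<bar> \<le> e"
    proof -
      have "\<bar>R $ j\<bar> \<le> norm R" by (rule component_le_norm_cart)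
      also have "\<dots> = \<bar>1/mu\<bar>^Suc N * norm (?G (Suc N) w)" unfolding R_def by (simp add: power_abs)
      also have "\<dots> \<le> \<bar>1/mu\<bar>^Suc N * (?h^Suc N * norm w)"
        by (intro mult_left_mono G_norm) simp
      also have "\<dots> = q ^ Suc N" unfolding q_def nw by (simp add: power_divide power_abs)
      finally show ?thesis using qN N_def by simp
    qed
    define T3 where "T3 = (\<Sum>s\<in>T. \<bar>k s\<bar> * (\<bar>u s $ j\<bar> + S (u s)))"
    have T3b: "\<bar>\<Sum>s\<in>T. k s * (u s $ j + Psi (u s) $ j)\<bar> \<le> T3"
    proof -
      have "\<bar>\<Sum>s\<in>T. k s * (u s $ j + Psi (u s) $ j)\<bar> \<le> (\<Sum>s\<in>T. \<bar>k s * (u s $ j + Psi (u s) $ j)\<bar>)"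
        by (rule sum_abs)
      also have "\<dots> \<le> T3" unfolding T3_def
      proof (rule sum_mono)
        fix s
        have "\<bar>u s $ j + Psi (u s) $ j\<bar> \<le> \<bar>u s $ j\<bar> + S (u s)" using PsiS[of "u s"] by linarith
        then show "\<bar>k s * (u s $ j + Psi (u s) $ j)\<bar> \<le> \<bar>k s\<bar> * (\<bar>u s $ j\<bar> + S (u s))"
          unfolding abs_mult by (intro mult_left_mono) auto
      qed
      finally show ?thesis .
    qed
    have ktr: "k t = c t * r" unfolding k_def r_def by simp
    have main: "\<bar>w $ j - zeta * u t $ j\<bar> \<le> alpha * \<bar>u t $ j\<bar> + 2 * S (u t) + T3 + e"
    proof -
      have "w $ j - zeta * u t $ j = (c t * r - zeta) * u t $ j + k t * Psi (u t) $ j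
          + (\<Sum>s\<in>T. k s * (u s $ j + Psi (u s) $ j)) + R $ j"
        using wj ktr by (simp add: algebra_simps)
      then have "\<bar>w $ j - zeta * u t $ j\<bar> \<le> \<bar>c t * r - zeta\<bar> * \<bar>u t $ j\<bar> + \<bar>k t\<bar> * \<bar>Psi (u t) $ j\<bar>
          + \<bar>\<Sum>s\<in>T. k s * (u s $ j + Psi (u s) $ j)\<bar> + \<bar>R $ j\<bar>"
        by (simp add: abs_mult[symmetric])
      moreover have "\<bar>c t * r - zeta\<bar> * \<bar>u t $ j\<bar> \<le> alpha * \<bar>u t $ j\<bar>" using kt by (intro mult_right_mono) auto
      moreover have "\<bar>k t\<bar> * \<bar>Psi (u t) $ j\<bar> \<le> 2 * S (u t)"
      proof -
        have "\<bar>k t\<bar> \<le> 2" unfolding ktr abs_mult using cle1[OF tn] r2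
          by (metis abs_ge_zero mult_le_one mult.commute mult_mono' mult_1_right order_trans)
        then show ?thesis using PsiS[of "u t"] by (intro mult_mono) auto
      qed
      ultimately show ?thesis using T3b Rj by linarith
    qed
    have minle: "min \<bar>(ut t - u t) $ j\<bar> \<bar>(ut t + u t) $ j\<bar> \<le> \<bar>w $ j - zeta * u t $ j\<bar>"
      unfolding w_def zeta_def by auto
    have T3e: "ennreal T3 \<le> ennreal beta * (\<Sum>s\<in>T. ennreal \<bar>lam s / lam t\<bar> * (ennreal \<bar>u s $ j\<bar> + xi H (lam t) (u s) j))"
    proof (cases "T = {}")
      case True then show ?thesis unfolding T3_def by simp
    next
      case False
      have D: "Delta > 0" using Dpos[OF False] .
      have b0: "0 \<le> beta" unfolding beta_def using D h0 by simp
      have X: "ennreal (\<Sum>s\<in>T. \<bar>lam s / lam t\<bar> * (\<bar>u s $ j\<bar> + S (u s)))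
          = (\<Sum>s\<in>T. ennreal (\<bar>lam s / lam t\<bar> * (\<bar>u s $ j\<bar> + S (u s))))"
        using S0 by (intro sum_ennreal[symmetric]) auto
      also have "\<dots> = (\<Sum>s\<in>T. ennreal \<bar>lam s / lam t\<bar> * (ennreal \<bar>u s $ j\<bar> + ennreal (S (u s))))"
      proof (rule sum.cong[OF refl])
        fix s
        show "ennreal (\<bar>lam s / lam t\<bar> * (\<bar>u s $ j\<bar> + S (u s))) = ennreal \<bar>lam s / lam t\<bar> * (ennreal \<bar>u s $ j\<bar> + ennreal (S (u s)))"
          using S0[of "u s"] by (simp only: ennreal_mult[OF abs_ge_zero add_nonneg_nonneg[OF abs_ge_zero S0]] ennreal_plus[OF abs_ge_zero S0])
      qed
      finally have X2: "ennreal (\<Sum>s\<in>T. \<bar>lam s / lam t\<bar> * (\<bar>u s $ j\<bar> + S (u s))) = (\<Sum>s\<in>T. ennreal \<bar>lam s / lam t\<bar> * (ennreal \<bar>u s $ j\<bar> + ennreal (S (u s))))" .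
      have "T3 \<le> (\<Sum>s\<in>T. beta * \<bar>lam s / lam t\<bar> * (\<bar>u s $ j\<bar> + S (u s)))"
        unfolding T3_def k_def using ks S0 by (intro sum_mono mult_right_mono) auto
      also have "\<dots> = beta * (\<Sum>s\<in>T. \<bar>lam s / lam t\<bar> * (\<bar>u s $ j\<bar> + S (u s)))"
        by (simp add: sum_distrib_left mult_ac)
      finally have "ennreal T3 \<le> ennreal (beta * (\<Sum>s\<in>T. \<bar>lam s / lam t\<bar> * (\<bar>u s $ j\<bar> + S (u s))))"
        by (rule ennreal_leI)
      also have "\<dots> = ennreal beta * ennreal (\<Sum>s\<in>T. \<bar>lam s / lam t\<bar> * (\<bar>u s $ j\<bar> + S (u s)))"
        using b0 S0 by (intro ennreal_mult) (auto intro!: sum_nonneg)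
      also have "\<dots> = ennreal beta * (\<Sum>s\<in>T. ennreal \<bar>lam s / lam t\<bar> * (ennreal \<bar>u s $ j\<bar> + ennreal (S (u s))))"
        by (simp only: X2)
      also have "\<dots> \<le> ennreal beta * (\<Sum>s\<in>T. ennreal \<bar>lam s / lam t\<bar> * (ennreal \<bar>u s $ j\<bar> + xi H (lam t) (u s) j))"
        unfolding S_def by (intro mult_left_mono sum_mono add_left_mono xi_partial) auto
      finally show ?thesis .
    qed
    have St: "ennreal (2 * S (u t)) \<le> 2 * xi H (lam t) (u t) j"
    proof -
      have "ennreal (2 * S (u t)) = 2 * ennreal (S (u t))" using S0 by (simp add: ennreal_mult)
      also have "\<dots> \<le> 2 * xi H (lam t) (u t) j" unfolding S_def by (intro mult_left_mono xi_partial) auto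
      finally show ?thesis .
    qed
    have "ennreal (min \<bar>(ut t - u t) $ j\<bar> \<bar>(ut t + u t) $ j\<bar>) \<le> ennreal (alpha * \<bar>u t $ j\<bar> + 2 * S (u t) + T3 + e)"
      using minle main by (intro ennreal_leI) linarith
    also have "\<dots> = ennreal (alpha * \<bar>u t $ j\<bar>) + ennreal (2 * S (u t)) + ennreal T3 + ennreal e"
      using alpha0 S0 e unfolding T3_def
      by (simp add: ennreal_plus sum_nonneg)
    also have "\<dots> \<le> ennreal (alpha * \<bar>u t $ j\<bar>) + 2 * xi H (lam t) (u t) j
        + ennreal beta * (\<Sum>s\<in>T. ennreal \<bar>lam s / lam t\<bar> * (ennreal \<bar>u s $ j\<bar> + xi H (lam t) (u s) j)) + ennreal e"
      by (intro add_mono St T3e order_refl)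
    finally show "ennreal (min \<bar>(ut t - u t) $ j\<bar> \<bar>(ut t + u t) $ j\<bar>)
     \<le> ennreal ((4 * (spec_norm H)\<^sup>2 / Delta\<^sup>2 + 2 * spec_norm H / \<bar>lam t\<bar>) * \<bar>u t $ j\<bar>)
        + 2 * xi H (lam t) (u t) j
        + ennreal (4 * sqrt 2 * spec_norm H / Delta)
          * (\<Sum>s\<in>{..<n} - {t}. ennreal \<bar>lam s / lam t\<bar> * (ennreal \<bar>u s $ j\<bar> + xi H (lam t) (u s) j)) + ennreal e"
      unfolding alpha_def beta_def T_def .
  qed
qed
end
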